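(* For all $m,n\ge0$, the space $W_{m,n}$ is spanned by the vectors $$v_{\alpha,\beta}=\prod_{j=1}^m\bar e_{\alpha_j+2(m-j)+1-n}\prod_{j=1}^n\bar f_{\beta_j+2(n-j)+1}\,\bar v,$$ where $\alpha=(\alpha_1\ge\cdots\ge\alpha_m\ge0)$ and $\beta=(\beta_1\ge\cdots\ge\beta_n\ge0)$ range over sequences of nonnegative integers.
   Context: Let $\mathcal H$ be the Lie algebra with basis $\bar e_i,\bar h_i,\bar f_i$ ($i\in\mathbb Z$), brackets $[\bar e_i,\bar f_j]=\bar h_{i+j}$ and all other brackets of basis elements zero. Let $\mathcal H^-$ be spanned by basis elements of index $\le0$, and $M_{\mathcal H}=U(\mathcal H)\otimes_{U(\mathcal H^-)}\mathbb C\bar v$ induced from the trivial one-dimensional $\mathcal H^-$-module. With $\bar e(z)=\sum_i\bar e_iz^i$, etc., $W$ is the quotient of $M_{\mathcal H}$ by the span of all $z$-coefficients of $\bar e(z)^2u,\bar f(z)^2u,\bar e(z)\bar h(z)u,\bar f(z)\bar h(z)u,\bar h(z)^2u$, $u\in M_{\mathcal H}$ (we write $\bar v$ also for its image). $W$ is $\mathbb Z^3$-graded by $\deg\bar v=(0,0,0)$, $\deg\bar e_i=(1,0,i)$, $\deg\bar h_i=(1,1,i)$, $\deg\bar f_i=(0,1,i)$; $W_{m,n}$ is the sum of the components whose first two degrees are $(m,n)$. *)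

theory Defs
  imports Complex_Main
begin

text \<open>Generators of the Lie algebra H: Ge i = e_i, Gh i = h_i, Gf i = f_i.\<close>
datatype gen = Ge int | Gh int | Gf int

fun gidx :: "gen \<Rightarrow> int" where
  "gidx (Ge i) = i" | "gidx (Gh i) = i" | "gidx (Gf i) = i"

text \<open>Elements of the free associative algebra on the generators are
  (finitely supported) functions from words to complex coefficients.
  A word w acting on the vector v represents w v.\<close>
type_synonym elt = "gen list \<Rightarrow> complex"

definition single :: "gen list \<Rightarrow> elt" where
  "single w = (\<lambda>u. if u = w then 1 else 0)"

inductive_set cspan :: "elt set \<Rightarrow> elt set" for S :: "elt set" where
  zero: "(\<lambda>_. 0) \<in> cspan S"
| gen: "x \<in> S \<Longrightarrow> x \<in> cspan S"
| add: "x \<in> cspan S \<Longrightarrow> y \<in> cspan S \<Longrightarrow> (\<lambda>w. x w + y w) \<in> cspan S"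
| smult: "x \<in> cspan S \<Longrightarrow> (\<lambda>w. c * x w) \<in> cspan S"

fun brk :: "gen \<Rightarrow> gen \<Rightarrow> gen list \<Rightarrow> gen list \<Rightarrow> elt" where
  "brk (Ge i) (Gf j) a b = single (a @ [Gh (i + j)] @ b)"
| "brk (Gf j) (Ge i) a b = (\<lambda>u. - single (a @ [Gh (i + j)] @ b) u)"
| "brk _ _ a b = (\<lambda>_. 0)"

text \<open>Generators of the kernel of the map  free algebra \<rightarrow> M_H, a \<mapsto> a v:
  the two-sided ideal defining U(H), and the left ideal generated by H^-.\<close>
definition R0gens :: "elt set" where
  "R0gens =
     {(\<lambda>u. single (a @ [x, y] @ b) u - single (a @ [y, x] @ b) u - brk x y a b u)
        | a b x y. True}
   \<union> {single (a @ [x]) | a x. gidx x \<le> 0}"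

text \<open>The z^k coefficient of X(z)Y(z) b v, i.e. the sum over i+j=k of X_i Y_j b v.
  This is a finite sum in M_H; it is represented by the truncation to the window
  k-M \<le> i \<le> M, for any M beyond which all terms vanish in M_H.\<close>
definition coeffRel :: "(int \<Rightarrow> gen) \<Rightarrow> (int \<Rightarrow> gen) \<Rightarrow> elt set" where
  "coeffRel X Y =
     {(\<lambda>u. \<Sum>i\<in>{k - M..M}. single ([X i, Y (k - i)] @ b) u) | k M b.
        \<forall>i. i \<notin> {k - M..M} \<longrightarrow> single ([X i, Y (k - i)] @ b) \<in> cspan R0gens}"

definition RWgens :: "elt set" where
  "RWgens = coeffRel Ge Ge \<union> coeffRel Gf Gf \<union> coeffRel Ge Gh \<union> coeffRel Gf Gh
            \<union> coeffRel Gh Gh"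

text \<open>Kernel generators of the map free algebra \<rightarrow> W.\<close>
definition Wrels :: "elt set" where
  "Wrels = R0gens \<union> RWgens"

text \<open>First two components of the Z^3-degree of a word.\<close>
definition deg2 :: "gen list \<Rightarrow> nat \<times> nat" where
  "deg2 w = (length (filter (\<lambda>g. case g of Gf _ \<Rightarrow> False | _ \<Rightarrow> True) w),
             length (filter (\<lambda>g. case g of Ge _ \<Rightarrow> False | _ \<Rightarrow> True) w))"

text \<open>The word of v_{alpha,beta} (0-indexed: j' = j - 1).\<close>
definition vword :: "nat \<Rightarrow> nat \<Rightarrow> nat list \<Rightarrow> nat list \<Rightarrow> gen list" where
  "vword m n \<alpha> \<beta> =
     map (\<lambda>j. Ge (int (\<alpha> ! j) + 2 * (int m - 1 - int j) + 1 - int n)) [0..<m]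
     @ map (\<lambda>j. Gf (int (\<beta> ! j) + 2 * (int n - 1 - int j) + 1)) [0..<n]"

definition Vset :: "nat \<Rightarrow> nat \<Rightarrow> elt set" where
  "Vset m n = {single (vword m n \<alpha> \<beta>) | \<alpha> \<beta>.
       length \<alpha> = m \<and> sorted_wrt (\<ge>) \<alpha> \<and> length \<beta> = n \<and> sorted_wrt (\<ge>) \<beta>}"

end

theory Submission
  imports Defs "HOL-Library.Function_Algebras" "HOL-Library.Multiset"
begin

definition sm :: "complex \<Rightarrow> elt \<Rightarrow> elt" where
  "sm c x = (\<lambda>w. c * x w)"

lemma cs_zero: "0 \<in> cspan S"
  using cspan.zero[of S] by (simp add: zero_fun_def)

lemma cs_add: "x \<in> cspan S \<Longrightarrow> y \<in> cspan S \<Longrightarrow> x + y \<in> cspan S"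
  using cspan.add[of x S y] by (simp add: plus_fun_def)

lemma cs_sm: "x \<in> cspan S \<Longrightarrow> sm c x \<in> cspan S"
  using cspan.smult[of x S c] by (simp add: sm_def)

lemma cs_neg: "x \<in> cspan S \<Longrightarrow> - x \<in> cspan S"
proof -
  assume "x \<in> cspan S"
  then have "sm (-1) x \<in> cspan S" by (rule cs_sm)
  moreover have "sm (-1) x = - x" by (auto simp: sm_def fun_eq_iff)
  ultimately show ?thesis by simp
qed

lemma cs_diff: "x \<in> cspan S \<Longrightarrow> y \<in> cspan S \<Longrightarrow> x - y \<in> cspan S"
  using cs_add[of x S "-y"] cs_neg[of y S] by simp

lemma cs_sum: "finite I \<Longrightarrow> (\<And>i. i \<in> I \<Longrightarrow> f i \<in> cspan S) \<Longrightarrow> sum f I \<in> cspan S"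
  by (induction I rule: finite_induct) (auto intro: cs_add cs_zero)

lemma cs_sub: "S \<subseteq> cspan T \<Longrightarrow> cspan S \<subseteq> cspan T"
proof
  fix x assume a: "S \<subseteq> cspan T" and "x \<in> cspan S"
  from this(2) show "x \<in> cspan T"
    by (induction x rule: cspan.induct) (use a in \<open>auto intro: cspan.intros\<close>)
qed

lemma cs_mono: "S \<subseteq> T \<Longrightarrow> cspan S \<subseteq> cspan T"
  by (rule cs_sub) (auto intro: cspan.gen)

lemma sum_apply: "(sum f I) u = sum (\<lambda>i. f i u) I"
  by (induction I rule: infinite_finite_induct) auto

lemma sm_sum: "sm c (sum f I) = sum (\<lambda>i. sm c (f i)) I"
  by (auto simp: sm_def fun_eq_iff sum_apply sum_distrib_left)


definition bc :: "gen \<Rightarrow> gen \<Rightarrow> complex" where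
  "bc g y = (case (g, y) of (Ge _, Gf _) \<Rightarrow> 1 | (Gf _, Ge _) \<Rightarrow> -1 | _ \<Rightarrow> 0)"

lemma brk_bc: "brk g y a b = sm (bc g y) (single (a @ [Gh (gidx g + gidx y)] @ b))"
  by (cases g; cases y) (auto simp: bc_def sm_def fun_eq_iff add.commute)

lemma comm: "single (a @ [x, y] @ b) - single (a @ [y, x] @ b) - brk x y a b \<in> R0gens"
proof -
  have "single (a @ [x, y] @ b) - single (a @ [y, x] @ b) - brk x y a b =
     (\<lambda>u. single (a @ [x, y] @ b) u - single (a @ [y, x] @ b) u - brk x y a b u)"
    by (simp add: fun_eq_iff)
  then show ?thesis unfolding R0gens_def by blast
qed

lemma endv: "gidx x \<le> 0 \<Longrightarrow> single (a @ [x]) \<in> R0gens"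
  unfolding R0gens_def by blast

lemma comm': "single (a @ [x, y] @ b) = single (a @ [y, x] @ b) + sm (bc x y) (single (a @ [Gh (gidx x + gidx y)] @ b)) + (single (a @ [x, y] @ b) - single (a @ [y, x] @ b) - brk x y a b)"
  by (simp add: brk_bc)

definition bnd :: "gen list \<Rightarrow> int" where
  "bnd w = sum_list (map (\<lambda>g. \<bar>gidx g\<bar>) w)"

lemma bnd_simps[simp]: "bnd [] = 0" "bnd (g # w) = \<bar>gidx g\<bar> + bnd w" "bnd (u @ w) = bnd u + bnd w"
  by (auto simp: bnd_def)

lemma bnd_nonneg: "bnd w \<ge> 0"
  by (induction w) auto

lemma van: "gidx g \<le> - bnd r \<Longrightarrow> single (P @ [g] @ r) \<in> cspan R0gens"
proof (induction r arbitrary: P g)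
  case Nil
  then show ?case using endv[of g P] by (auto intro: cspan.gen)
next
  case (Cons y r)
  have e: "single (P @ [g] @ y # r) = single ((P @ [y]) @ [g] @ r) + sm (bc g y) (single (P @ [Gh (gidx g + gidx y)] @ r)) + (single (P @ [g, y] @ r) - single (P @ [y, g] @ r) - brk g y P r)"
    using comm'[of P g y r] by simp
  have 1: "single ((P @ [y]) @ [g] @ r) \<in> cspan R0gens"
    using Cons.IH[of g "P @ [y]"] Cons.prems bnd_nonneg[of r] by auto
  have 2: "single (P @ [Gh (gidx g + gidx y)] @ r) \<in> cspan R0gens"
    using Cons.IH[of "Gh (gidx g + gidx y)" P] Cons.prems by auto
  have 3: "single (P @ [g, y] @ r) - single (P @ [y, g] @ r) - brk g y P r \<in> cspan R0gens"
    using comm by (rule cspan.gen)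
  show ?case unfolding e by (intro cs_add 1 cs_sm 2 3)
qed

definition allowed :: "(int \<Rightarrow> gen) \<Rightarrow> (int \<Rightarrow> gen) \<Rightarrow> bool" where
  "allowed X Y \<longleftrightarrow> (X, Y) \<in> {(Ge,Ge),(Gf,Gf),(Gh,Gh),(Ge,Gh),(Gh,Ge),(Gf,Gh),(Gh,Gf)}"

definition relp :: "(int \<Rightarrow> gen) \<Rightarrow> (int \<Rightarrow> gen) \<Rightarrow> bool" where
  "relp X Y \<longleftrightarrow> (X, Y) \<in> {(Ge,Ge),(Gf,Gf),(Ge,Gh),(Gf,Gh),(Gh,Gh)}"

definition wsum :: "gen list \<Rightarrow> (int \<Rightarrow> gen) \<Rightarrow> (int \<Rightarrow> gen) \<Rightarrow> int \<Rightarrow> int \<Rightarrow> int \<Rightarrow> gen list \<Rightarrow> elt" where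
  "wsum P X Y K lo hi r = (\<Sum>i\<in>{lo..hi}. single (P @ [X i, Y (K - i)] @ r))"

lemma allowed_bc0: "allowed X Y \<Longrightarrow> bc (X i) (Y j) = 0"
  by (auto simp: allowed_def bc_def)

lemma allowed_gidx: "allowed X Y \<Longrightarrow> gidx (X i) = i \<and> gidx (Y i) = i"
  by (auto simp: allowed_def)

lemma swap0: "bc x y = 0 \<Longrightarrow> single (a @ [x, y] @ b) - single (a @ [y, x] @ b) \<in> cspan R0gens"
proof -
  assume "bc x y = 0"
  then have "single (a @ [x, y] @ b) - single (a @ [y, x] @ b) = single (a @ [x, y] @ b) - single (a @ [y, x] @ b) - brk x y a b"
    by (simp add: brk_bc sm_def fun_eq_iff)
  then show ?thesis using comm[of a x y b] by (auto intro: cspan.gen)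
qed

lemma R0_W: "cspan R0gens \<subseteq> cspan Wrels"
  by (rule cs_mono) (auto simp: Wrels_def)

lemma van2: "allowed X Y \<Longrightarrow> i \<le> - bnd r \<or> K - i \<le> - bnd r \<Longrightarrow> single (P @ [X i, Y (K - i)] @ r) \<in> cspan R0gens"
proof -
  assume a: "allowed X Y" and b: "i \<le> - bnd r \<or> K - i \<le> - bnd r"
  show ?thesis
  proof (cases "K - i \<le> - bnd r")
    case True
    then show ?thesis using van[of "Y (K - i)" r "P @ [X i]"] allowed_gidx[OF a] by simp
  next
    case False
    then have "i \<le> - bnd r" using b by auto
    then have 1: "single ((P @ [Y (K - i)]) @ [X i] @ r) \<in> cspan R0gens"
      using van[of "X i" r "P @ [Y (K - i)]"] allowed_gidx[OF a] by simp
    have 2: "single (P @ [X i, Y (K - i)] @ r) - single (P @ [Y (K - i), X i] @ r) \<in> cspan R0gens"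
      using swap0 allowed_bc0[OF a] by blast
    have "single (P @ [X i, Y (K - i)] @ r) = (single (P @ [X i, Y (K - i)] @ r) - single (P @ [Y (K - i), X i] @ r)) + single ((P @ [Y (K - i)]) @ [X i] @ r)"
      by simp
    then show ?thesis using cs_add[OF 2 1] by simp
  qed
qed

lemma base_rel:
  assumes r: "relp X Y" and lo: "lo \<le> - bnd r" and hi: "K + bnd r \<le> hi"
  shows "wsum [] X Y K lo hi r \<in> cspan Wrels"
proof -
  have al: "allowed X Y" using r by (auto simp: relp_def allowed_def)
  define M where "M = max hi (K - lo)"
  have side: "\<forall>i. i \<notin> {K - M..M} \<longrightarrow> single ([X i, Y (K - i)] @ r) \<in> cspan R0gens"
  proof (intro allI impI)
    fix i assume "i \<notin> {K - M..M}"
    then have "i \<le> - bnd r \<or> K - i \<le> - bnd r" using lo hi unfolding M_def by auto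
    then show "single ([X i, Y (K - i)] @ r) \<in> cspan R0gens" using van2[OF al, of i r K "[]"] by simp
  qed
  have "(\<lambda>u. \<Sum>i\<in>{K - M..M}. single ([X i, Y (K - i)] @ r) u) \<in> coeffRel X Y"
    unfolding coeffRel_def mem_Collect_eq by (intro exI[of _ K] exI[of _ M] exI[of _ r] conjI refl side)
  moreover have "coeffRel X Y \<subseteq> Wrels"
  proof -
    have "(X, Y) = (Ge,Ge) \<or> (X, Y) = (Gf,Gf) \<or> (X, Y) = (Ge,Gh) \<or> (X, Y) = (Gf,Gh) \<or> (X, Y) = (Gh,Gh)"
      using r unfolding relp_def by blast
    then show ?thesis unfolding Wrels_def RWgens_def by (elim disjE) (simp_all add: le_supI1 le_supI2)
  qed
  moreover have "(\<lambda>u. \<Sum>i\<in>{K - M..M}. single ([X i, Y (K - i)] @ r) u) = wsum [] X Y K (K - M) M r"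
    unfolding wsum_def by (simp add: fun_eq_iff sum_apply)
  ultimately have big: "wsum [] X Y K (K - M) M r \<in> cspan Wrels"
    by (auto intro: cspan.gen)
  have sub: "{lo..hi} \<subseteq> {K - M..M}" unfolding M_def by auto
  have rest: "(\<Sum>i\<in>{K - M..M} - {lo..hi}. single ([X i, Y (K - i)] @ r)) \<in> cspan Wrels"
  proof (rule cs_sum)
    fix i assume "i \<in> {K - M..M} - {lo..hi}"
    then have "i \<le> - bnd r \<or> K - i \<le> - bnd r" using lo hi by auto
    then show "single ([X i, Y (K - i)] @ r) \<in> cspan Wrels" using van2[OF al, of i r K "[]"] R0_W by auto
  qed simp
  have "wsum [] X Y K (K - M) M r = (\<Sum>i\<in>{K - M..M} - {lo..hi}. single ([X i, Y (K - i)] @ r)) + wsum [] X Y K lo hi r"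
    unfolding wsum_def append.simps(1) by (rule sum.subset_diff[OF sub]) simp
  then have "wsum [] X Y K lo hi r = wsum [] X Y K (K - M) M r - (\<Sum>i\<in>{K - M..M} - {lo..hi}. single ([X i, Y (K - i)] @ r))"
    by (simp add: algebra_simps)
  then show ?thesis using cs_diff[OF big rest] by simp
qed

lemma sum_shift_int: "(\<Sum>i\<in>{lo..hi}. f (j + i)) = (\<Sum>i\<in>{lo + j..hi + j::int}. (f i :: 'a :: comm_monoid_add))"
  by (rule sum.reindex_bij_witness[where i="\<lambda>i. i - j" and j="\<lambda>i. j + i"]) auto

lemma sum_flip_int: "(\<Sum>i\<in>{K - hi..K - lo::int}. f i) = (\<Sum>i\<in>{lo..hi}. (f (K - i) :: 'a :: comm_monoid_add))"
  by (rule sum.reindex_bij_witness[where i="\<lambda>i. K - i" and j="\<lambda>i. K - i"]) auto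

lemma flip:
  assumes al: "allowed X Y"
  shows "wsum P X Y K lo hi r - wsum P Y X K (K - hi) (K - lo) r \<in> cspan R0gens"
proof -
  have "wsum P Y X K (K - hi) (K - lo) r = (\<Sum>i\<in>{lo..hi}. single (P @ [Y (K - i), X i] @ r))"
    unfolding wsum_def by (subst sum_flip_int) simp
  then have "wsum P X Y K lo hi r - wsum P Y X K (K - hi) (K - lo) r =
     (\<Sum>i\<in>{lo..hi}. single (P @ [X i, Y (K - i)] @ r) - single (P @ [Y (K - i), X i] @ r))"
    unfolding wsum_def by (simp only: sum_subtractf)
  also have "\<dots> \<in> cspan R0gens"
  proof (rule cs_sum)
    fix i show "single (P @ [X i, Y (K - i)] @ r) - single (P @ [Y (K - i), X i] @ r) \<in> cspan R0gens"
      using swap0[of "X i" "Y (K - i)" P r] allowed_bc0[OF al] by blast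
  qed simp
  finally show ?thesis .
qed

lemma base_all:
  assumes al: "allowed X Y" and lo: "lo \<le> - bnd r" and hi: "K + bnd r \<le> hi"
  shows "wsum [] X Y K lo hi r \<in> cspan Wrels"
proof (cases "relp X Y")
  case True
  then show ?thesis using base_rel lo hi by blast
next
  case False
  then have r: "relp Y X" using al by (auto simp: allowed_def relp_def)
  have 1: "wsum [] Y X K (K - hi) (K - lo) r \<in> cspan Wrels"
    by (rule base_rel[OF r]) (use lo hi in auto)
  have 2: "wsum [] X Y K lo hi r - wsum [] Y X K (K - hi) (K - lo) r \<in> cspan Wrels"
    using flip[OF al] R0_W by blast
  show ?thesis using cs_add[OF 2 1] by simp
qed

lemma bc_const: "allowed X Y \<Longrightarrow> bc g (X i) = bc g (X 0) \<and> bc g (Y i) = bc g (Y 0)"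
  by (cases g) (auto simp: allowed_def bc_def)

lemma bc_allowed1: "allowed X Y \<Longrightarrow> bc g (X 0) \<noteq> 0 \<Longrightarrow> allowed Gh Y"
  by (cases g) (auto simp: allowed_def bc_def)

lemma bc_allowed2: "allowed X Y \<Longrightarrow> bc g (Y 0) \<noteq> 0 \<Longrightarrow> allowed X Gh"
  by (cases g) (auto simp: allowed_def bc_def)

lemma sm_zero[simp]: "sm 0 x = 0"
  by (simp add: sm_def fun_eq_iff)

lemma W_R0: "x \<in> R0gens \<Longrightarrow> x \<in> cspan Wrels"
  by (rule cspan.gen) (simp add: Wrels_def)

lemma claimC:
  "allowed X Y \<Longrightarrow> lo \<le> - bnd (P @ r) \<Longrightarrow> K + bnd (P @ r) \<le> hi \<Longrightarrow> wsum P X Y K lo hi r \<in> cspan Wrels"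
proof (induction P arbitrary: X Y K lo hi r rule: rev_induct)
  case Nil
  then show ?case using base_all by simp
next
  case (snoc g P)
  note al = snoc.prems(1)
  define j where "j = gidx g"
  define cX where "cX = bc g (X 0)"
  define cY where "cY = bc g (Y 0)"
  define r1 where "r1 = (\<lambda>i. single (P @ [g, X i] @ (Y (K - i) # r)) - single (P @ [X i, g] @ (Y (K - i) # r)) - brk g (X i) P (Y (K - i) # r))"
  define r2 where "r2 = (\<lambda>i. single ((P @ [X i]) @ [g, Y (K - i)] @ r) - single ((P @ [X i]) @ [Y (K - i), g] @ r) - brk g (Y (K - i)) (P @ [X i]) r)"
  have trm: "single ((P @ [g]) @ [X i, Y (K - i)] @ r) = single (P @ [X i, Y (K - i)] @ (g # r))
      + sm cX (single (P @ [Gh (j + i), Y (K - i)] @ r)) + sm cY (single (P @ [X i, Gh (j + (K - i))] @ r))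
      + r1 i + r2 i" for i
  proof -
    have e1: "single (P @ [g, X i] @ (Y (K - i) # r)) = single (P @ [X i, g] @ (Y (K - i) # r)) + sm (bc g (X i)) (single (P @ [Gh (gidx g + gidx (X i))] @ (Y (K - i) # r))) + r1 i"
      unfolding r1_def by (rule comm')
    have e2: "single ((P @ [X i]) @ [g, Y (K - i)] @ r) = single ((P @ [X i]) @ [Y (K - i), g] @ r) + sm (bc g (Y (K - i))) (single ((P @ [X i]) @ [Gh (gidx g + gidx (Y (K - i)))] @ r)) + r2 i"
      unfolding r2_def by (rule comm')
    show ?thesis using e1 e2 bc_const[OF al, of g i] bc_const[OF al, of g "K - i"] allowed_gidx[OF al]
      unfolding cX_def cY_def j_def by (simp add: algebra_simps)
  qed
  have sumeq: "wsum (P @ [g]) X Y K lo hi r = wsum P X Y K lo hi (g # r)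
      + sm cX (\<Sum>i\<in>{lo..hi}. single (P @ [Gh (j + i), Y (K - i)] @ r))
      + sm cY (\<Sum>i\<in>{lo..hi}. single (P @ [X i, Gh (j + (K - i))] @ r))
      + (\<Sum>i\<in>{lo..hi}. r1 i) + (\<Sum>i\<in>{lo..hi}. r2 i)"
    unfolding wsum_def trm by (simp add: sum.distrib sm_sum)
  have s1: "(\<Sum>i\<in>{lo..hi}. single (P @ [Gh (j + i), Y (K - i)] @ r)) = wsum P Gh Y (K + j) (lo + j) (hi + j) r"
    unfolding wsum_def by (subst sum_shift_int[symmetric]) simp
  have s2: "(\<Sum>i\<in>{lo..hi}. single (P @ [X i, Gh (j + (K - i))] @ r)) = wsum P X Gh (K + j) lo hi r"
    unfolding wsum_def by (simp add: algebra_simps)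
  have b: "bnd ((P @ [g]) @ r) = bnd P + \<bar>j\<bar> + bnd r" unfolding j_def by simp
  have m0: "wsum P X Y K lo hi (g # r) \<in> cspan Wrels"
    using snoc.IH[OF al] snoc.prems by simp
  have m1: "sm cX (\<Sum>i\<in>{lo..hi}. single (P @ [Gh (j + i), Y (K - i)] @ r)) \<in> cspan Wrels"
  proof (cases "cX = 0")
    case True then show ?thesis by (simp add: cs_zero)
  next
    case False
    then have "allowed Gh Y" using bc_allowed1[OF al] unfolding cX_def by blast
    then have "wsum P Gh Y (K + j) (lo + j) (hi + j) r \<in> cspan Wrels"
      by (rule snoc.IH) (use snoc.prems b in auto)
    then show ?thesis unfolding s1 by (rule cs_sm)
  qed
  have m2: "sm cY (\<Sum>i\<in>{lo..hi}. single (P @ [X i, Gh (j + (K - i))] @ r)) \<in> cspan Wrels"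
  proof (cases "cY = 0")
    case True then show ?thesis by (simp add: cs_zero)
  next
    case False
    then have "allowed X Gh" using bc_allowed2[OF al] unfolding cY_def by blast
    then have "wsum P X Gh (K + j) lo hi r \<in> cspan Wrels"
      by (rule snoc.IH) (use snoc.prems b in auto)
    then show ?thesis unfolding s2 by (rule cs_sm)
  qed
  have m3: "(\<Sum>i\<in>{lo..hi}. r1 i) \<in> cspan Wrels"
    by (rule cs_sum) (simp_all only: r1_def W_R0[OF comm] finite_atLeastAtMost)
  have m4: "(\<Sum>i\<in>{lo..hi}. r2 i) \<in> cspan Wrels"
    by (rule cs_sum) (simp_all only: r2_def W_R0[OF comm] finite_atLeastAtMost)
  show ?case unfolding sumeq by (intro cs_add m0 m1 m2 m3 m4)
qed

lemma cs_trans: "a - b \<in> cspan S \<Longrightarrow> b - c \<in> cspan S \<Longrightarrow> a - c \<in> cspan S"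
  using cs_add[of "a - b" S "b - c"] by simp

lemma cs_sym: "a - b \<in> cspan S \<Longrightarrow> b - a \<in> cspan S"
  using cs_neg[of "a - b" S] by simp

lemma cs_transfer: "a - b \<in> cspan S \<Longrightarrow> b \<in> cspan S \<Longrightarrow> a \<in> cspan S"
  using cs_add[of "a - b" S b] by simp

lemma W_sub: "cspan Wrels \<subseteq> cspan (Wrels \<union> V)"
  by (rule cs_mono) auto

lemma R0_sub: "cspan R0gens \<subseteq> cspan (Wrels \<union> V)"
  using R0_W W_sub by blast

lemma spread:
  assumes al: "allowed X X" and xy: "\<bar>x - y\<bar> \<le> 1"
    and oth: "\<And>i. i \<noteq> x \<Longrightarrow> i \<noteq> y \<Longrightarrow> single (P @ [X i, X (x + y - i)] @ r) \<in> cspan (Wrels \<union> V)"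
  shows "single (P @ [X x, X y] @ r) \<in> cspan (Wrels \<union> V)"
proof -
  define K where "K = x + y"
  define lo where "lo = min (min x y) (- bnd (P @ r))"
  define hi where "hi = max (max x y) (K + bnd (P @ r))"
  define f where "f = (\<lambda>i. single (P @ [X i, X (K - i)] @ r))"
  define w where "w = single (P @ [X x, X y] @ r)"
  have ws: "wsum P X X K lo hi r \<in> cspan (Wrels \<union> V)"
    using claimC[OF al, of lo P r K hi] W_sub unfolding lo_def hi_def by auto
  have sub: "{x, y} \<subseteq> {lo..hi}" unfolding lo_def hi_def by auto
  have rest: "(\<Sum>i\<in>{lo..hi} - {x, y}. f i) \<in> cspan (Wrels \<union> V)"
  proof (rule cs_sum)
    fix i assume "i \<in> {lo..hi} - {x, y}"
    then show "f i \<in> cspan (Wrels \<union> V)" unfolding f_def K_def using oth[of i] by auto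
  qed simp
  have split: "wsum P X X K lo hi r = (\<Sum>i\<in>{lo..hi} - {x, y}. f i) + (\<Sum>i\<in>{x, y}. f i)"
    unfolding wsum_def f_def[symmetric] by (rule sum.subset_diff[OF sub]) simp
  show ?thesis
  proof (cases "x = y")
    case True
    then have "(\<Sum>i\<in>{x, y}. f i) = w" unfolding f_def w_def K_def by simp
    then have "w = wsum P X X K lo hi r - (\<Sum>i\<in>{lo..hi} - {x, y}. f i)" using split by simp
    then show ?thesis using cs_diff[OF ws rest] unfolding w_def by simp
  next
    case False
    define D where "D = w - single (P @ [X y, X x] @ r)"
    have D: "D \<in> cspan (Wrels \<union> V)"
      unfolding D_def w_def using swap0[of "X x" "X y" P r] allowed_bc0[OF al] R0_sub by blast
    have "(\<Sum>i\<in>{x, y}. f i) = w + single (P @ [X y, X x] @ r)"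
      using False unfolding f_def w_def K_def by simp
    then have "w = sm (1/2) (wsum P X X K lo hi r - (\<Sum>i\<in>{lo..hi} - {x, y}. f i) + D)"
      using split unfolding D_def by (simp add: sm_def fun_eq_iff)
    then show ?thesis using cs_sm[OF cs_add[OF cs_diff[OF ws rest] D]] unfolding w_def by simp
  qed
qed

lemma move_word:
  assumes c: "\<And>i j. bc (X i) (X j) = 0"
  shows "single (P @ map X (A @ [x] @ B) @ r) - single (P @ map X (x # A @ B) @ r) \<in> cspan R0gens"
proof (induction A arbitrary: P)
  case Nil
  then show ?case using cspan.zero by simp
next
  case (Cons a A)
  have 1: "single (P @ X a # map X (A @ [x] @ B) @ r) - single (P @ X a # X x # map X (A @ B) @ r) \<in> cspan R0gens"
    using Cons.IH[of "P @ [X a]"] by (simp only: append_assoc map_append append.simps list.map)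
  have 2: "single (P @ X a # X x # map X (A @ B) @ r) - single (P @ X x # X a # map X (A @ B) @ r) \<in> cspan R0gens"
    using swap0[of "X a" "X x" P "map X (A @ B) @ r"] c by (simp only: append_assoc map_append append.simps list.map)
  show ?case using cs_trans[OF 1 2] by (simp only: append_assoc map_append append.simps list.map)
qed

lemma perm_word:
  assumes c: "\<And>i j. bc (X i) (X j) = 0"
  shows "mset A = mset A' \<Longrightarrow> single (P @ map X A @ r) - single (P @ map X A' @ r) \<in> cspan R0gens"
proof (induction A arbitrary: A' P)
  case Nil
  then have "A' = []" by (metis mset_zero_iff_right)
  then show ?case using cspan.zero by simp
next
  case (Cons a A0)
  then have "a \<in> set A'" by (metis list.set_intros(1) set_mset_mset)
  then obtain A1 A2 where A': "A' = A1 @ a # A2" by (meson split_list)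
  then have "mset A0 = mset (A1 @ A2)" using Cons.prems by simp
  then have "single ((P @ [X a]) @ map X A0 @ r) - single ((P @ [X a]) @ map X (A1 @ A2) @ r) \<in> cspan R0gens"
    by (rule Cons.IH)
  then have 1: "single (P @ map X (a # A0) @ r) - single (P @ map X (a # A1 @ A2) @ r) \<in> cspan R0gens"
    by (simp only: append_assoc map_append append.simps list.map)
  have 2: "single (P @ map X (a # A1 @ A2) @ r) - single (P @ map X (A1 @ [a] @ A2) @ r) \<in> cspan R0gens"
    by (rule cs_sym, rule move_word[OF c])
  show ?case using cs_trans[OF 1 2] A' by (simp only: append_assoc append.simps)
qed

lemma sm_one[simp]: "sm 1 x = x"
  by (simp add: sm_def)

lemma expand:
  "c \<le> 0 \<Longrightarrow> single (P @ Ge c # map Gf B) - (\<Sum>t<length B. single (P @ map Gf (take t B) @ Gh (c + B ! t) # map Gf (drop (Suc t) B))) \<in> cspan R0gens"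
proof (induction B arbitrary: P)
  case Nil
  then show ?case using endv[of "Ge c" P] by (auto intro: cspan.gen)
next
  case (Cons b B)
  define rho where "rho = single (P @ [Ge c, Gf b] @ map Gf B) - single (P @ [Gf b, Ge c] @ map Gf B) - brk (Ge c) (Gf b) P (map Gf B)"
  have rho: "rho \<in> cspan R0gens" unfolding rho_def by (rule cspan.gen, rule comm)
  have c1: "single (P @ [Ge c, Gf b] @ map Gf B) = single (P @ [Gf b, Ge c] @ map Gf B) + single (P @ [Gh (c + b)] @ map Gf B) + rho"
    using comm'[of P "Ge c" "Gf b" "map Gf B"] unfolding rho_def by (simp add: bc_def)
  have ih: "single ((P @ [Gf b]) @ Ge c # map Gf B) - (\<Sum>t<length B. single ((P @ [Gf b]) @ map Gf (take t B) @ Gh (c + B ! t) # map Gf (drop (Suc t) B))) \<in> cspan R0gens"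
    using Cons.IH Cons.prems by blast
  have sh: "(\<Sum>t<length (b # B). single (P @ map Gf (take t (b # B)) @ Gh (c + (b # B) ! t) # map Gf (drop (Suc t) (b # B))))
     = single (P @ [Gh (c + b)] @ map Gf B) + (\<Sum>t<length B. single ((P @ [Gf b]) @ map Gf (take t B) @ Gh (c + B ! t) # map Gf (drop (Suc t) B)))"
    unfolding length_Cons sum.lessThan_Suc_shift by simp
  have eq: "single (P @ Ge c # map Gf (b # B)) - (\<Sum>t<length (b # B). single (P @ map Gf (take t (b # B)) @ Gh (c + (b # B) ! t) # map Gf (drop (Suc t) (b # B))))
     = (single ((P @ [Gf b]) @ Ge c # map Gf B) - (\<Sum>t<length B. single ((P @ [Gf b]) @ map Gf (take t B) @ Gh (c + B ! t) # map Gf (drop (Suc t) B)))) + rho"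
    unfolding sh using c1 by (simp add: algebra_simps)
  show ?case by (subst eq) (rule cs_add[OF ih rho])
qed

definition decS :: "nat set \<Rightarrow> int list \<Rightarrow> int list" where
  "decS S B = map (\<lambda>j. B ! j - (if j \<in> S then 1 else 0)) [0..<length B]"

lemma decS_len[simp]: "length (decS S B) = length B"
  by (simp add: decS_def)

lemma decS_empty[simp]: "decS {} B = B"
  by (simp add: decS_def map_nth)

definition Tm :: "gen list \<Rightarrow> int \<Rightarrow> int list \<Rightarrow> nat set \<Rightarrow> nat \<Rightarrow> elt" where
  "Tm P a B S t = single (P @ map Gf (take t (decS S B)) @ Gh (a + int (card S) + decS S B ! t) # map Gf (drop (Suc t) (decS S B)))"

lemma Tm_insert:
  assumes "t < length B" "t \<notin> S" "finite S"
  shows "Tm P a B (insert t S) t = Tm P a B S t"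
proof -
  have 1: "take t (decS (insert t S) B) = take t (decS S B)"
    unfolding decS_def using assms by (simp add: take_map)
  have 2: "drop (Suc t) (decS (insert t S) B) = drop (Suc t) (decS S B)"
    unfolding decS_def using assms by (simp add: drop_map)
  have 3: "a + int (card (insert t S)) + decS (insert t S) B ! t = a + int (card S) + decS S B ! t"
    unfolding decS_def using assms by simp
  show ?thesis unfolding Tm_def 1 2 3 ..
qed

lemma alt_zero:
  fixes f :: "nat set \<Rightarrow> elt"
  assumes t: "t < n" and invc: "\<And>S. S \<subseteq> {0..<n} \<Longrightarrow> t \<notin> S \<Longrightarrow> f (insert t S) = f S"
  shows "(\<Sum>S\<in>Pow {0..<n}. sm ((-1) ^ card S) (f S)) = 0"
proof -
  define A0 where "A0 = {S \<in> Pow {0..<n}. t \<notin> S}"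
  have fin: "finite A0" unfolding A0_def by auto
  have split: "Pow {0..<n} = A0 \<union> insert t ` A0"
  proof (rule set_eqI, rule iffI)
    fix S assume S: "S \<in> Pow {0..<n}"
    show "S \<in> A0 \<union> insert t ` A0"
    proof (cases "t \<in> S")
      case True
      then have "S = insert t (S - {t})" by auto
      moreover have "S - {t} \<in> A0" using S unfolding A0_def by auto
      ultimately show ?thesis by blast
    qed (use S A0_def in auto)
  qed (use t A0_def in auto)
  have disj: "A0 \<inter> insert t ` A0 = {}" unfolding A0_def by auto
  have inj: "inj_on (insert t) A0"
  proof (rule inj_onI)
    fix x y assume xy: "x \<in> A0" "y \<in> A0" "insert t x = insert t y"
    then have "insert t x - {t} = insert t y - {t}" by simp
    then show "x = y" using xy unfolding A0_def by auto
  qed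
  have "(\<Sum>S\<in>Pow {0..<n}. sm ((-1) ^ card S) (f S)) = (\<Sum>S\<in>A0. sm ((-1) ^ card S) (f S)) + (\<Sum>S\<in>insert t ` A0. sm ((-1) ^ card S) (f S))"
    unfolding split by (rule sum.union_disjoint) (use fin disj in auto)
  also have "(\<Sum>S\<in>insert t ` A0. sm ((-1) ^ card S) (f S)) = (\<Sum>S\<in>A0. sm ((-1) ^ card (insert t S)) (f (insert t S)))"
    by (rule sum.reindex[OF inj, unfolded o_def])
  also have "\<dots> = (\<Sum>S\<in>A0. - sm ((-1) ^ card S) (f S))"
  proof (rule sum.cong)
    fix S assume "S \<in> A0"
    then have S: "S \<subseteq> {0..<n}" "t \<notin> S" "finite S" unfolding A0_def using finite_subset by auto
    then show "sm ((-1) ^ card (insert t S)) (f (insert t S)) = - sm ((-1) ^ card S) (f S)"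
      using invc[OF S(1,2)] by (simp add: sm_def fun_eq_iff)
  qed simp
  finally show ?thesis by (simp add: sum_negf zero_fun_def)
qed

lemma r3:
  assumes a: "a + int (length B) \<le> 0"
  shows "(\<Sum>S\<in>Pow {0..<length B}. sm ((-1) ^ card S) (single (P @ Ge (a + int (card S)) # map Gf (decS S B)))) \<in> cspan R0gens"
proof -
  define n where "n = length B"
  define w where "w = (\<lambda>S. single (P @ Ge (a + int (card S)) # map Gf (decS S B)))"
  have ex: "w S - (\<Sum>t<n. Tm P a B S t) \<in> cspan R0gens" if S: "S \<in> Pow {0..<n}" for S
  proof -
    have "card S \<le> n" using S card_mono[of "{0..<n}" S] by auto
    then have c: "a + int (card S) \<le> 0" using a unfolding n_def by linarith
    show ?thesis using expand[OF c, of P "decS S B"] unfolding w_def Tm_def n_def by simp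
  qed
  have zero: "(\<Sum>S\<in>Pow {0..<n}. sm ((-1) ^ card S) (\<Sum>t<n. Tm P a B S t)) = 0"
  proof -
    have "(\<Sum>S\<in>Pow {0..<n}. sm ((-1) ^ card S) (\<Sum>t<n. Tm P a B S t)) = (\<Sum>t<n. \<Sum>S\<in>Pow {0..<n}. sm ((-1) ^ card S) (Tm P a B S t))"
      by (simp add: sm_sum sum.swap[of _ "Pow {0..<n}"])
    also have "\<dots> = (\<Sum>t<n. 0)"
    proof (rule sum.cong)
      fix t assume "t \<in> {..<n}"
      then have t: "t < n" by simp
      show "(\<Sum>S\<in>Pow {0..<n}. sm ((-1) ^ card S) (Tm P a B S t)) = 0"
        by (rule alt_zero[OF t]) (use t n_def finite_subset in \<open>auto intro!: Tm_insert\<close>)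
    qed simp
    finally show ?thesis by simp
  qed
  have "(\<Sum>S\<in>Pow {0..<n}. sm ((-1) ^ card S) (w S)) = (\<Sum>S\<in>Pow {0..<n}. sm ((-1) ^ card S) (w S - (\<Sum>t<n. Tm P a B S t))) + (\<Sum>S\<in>Pow {0..<n}. sm ((-1) ^ card S) (\<Sum>t<n. Tm P a B S t))"
    by (simp add: sum.distrib[symmetric] sm_def fun_eq_iff sum_apply algebra_simps)
  also have "\<dots> \<in> cspan R0gens"
    unfolding zero by (simp, rule cs_sum) (auto intro: cs_sm ex)
  finally show ?thesis unfolding w_def n_def .
qed

lemma sum_list_ge: "(\<forall>a\<in>set L. a \<ge> c) \<Longrightarrow> sum_list L \<ge> int (length L) * (c::int)"
  by (induction L) (auto simp: algebra_simps)

lemma sum_list_map_le: "(\<forall>a\<in>set L. f a \<le> k) \<Longrightarrow> sum_list (map f L) \<le> int (length L) * (k::int)"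
  by (induction L) (auto simp: algebra_simps)

definition sqs :: "int list \<Rightarrow> int" where
  "sqs L = sum_list (map (\<lambda>a. a ^ 2) L)"

lemma sum_list_mset: "mset L = mset L' \<Longrightarrow> sum_list L = (sum_list L' :: int)"
  by (metis sum_mset_sum_list)

lemma sqs_mset: "mset L = mset L' \<Longrightarrow> sqs L = sqs L'"
  unfolding sqs_def by (metis mset_map sum_mset_sum_list)

lemma sqs_nonneg: "sqs L \<ge> 0"
  unfolding sqs_def by (induction L) auto

lemma elem_le:
  assumes "\<forall>a\<in>set L. a \<ge> c" "a \<in> set L"
  shows "a \<le> sum_list L - (int (length L) - 1) * (c::int)"
proof -
  have "sum_list L = sum_list (a # remove1 a L)"
    by (rule sum_list_mset) (use assms(2) in simp)
  then have "sum_list L = a + sum_list (remove1 a L)" by simp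
  moreover have "sum_list (remove1 a L) \<ge> int (length (remove1 a L)) * c"
    using assms(1) set_remove1_subset[of a L] by (intro sum_list_ge) blast
  moreover have "length L > 0" using assms(2) by (cases L) auto
  then have "int (length (remove1 a L)) = int (length L) - 1"
    using assms(2) by (simp add: length_remove1) (cases L, auto)
  ultimately show ?thesis by (simp add: algebra_simps)
qed

lemma sqb:
  assumes "\<forall>a\<in>set L. a \<ge> c"
  shows "sqs L \<le> int (length L) * (\<bar>sum_list L\<bar> + (int (length L) + 1) * \<bar>c\<bar>) ^ 2"
  unfolding sqs_def
proof (rule sum_list_map_le, intro ballI)
  fix a assume a: "a \<in> set L"
  define U where "U = \<bar>sum_list L\<bar> + (int (length L) + 1) * \<bar>c\<bar>"
  have up: "a \<le> sum_list L - (int (length L) - 1) * c" by (rule elem_le[OF assms a])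
  have lo: "a \<ge> c" using assms a by auto
  have "\<bar>(int (length L) - 1) * c\<bar> \<le> (int (length L) + 1) * \<bar>c\<bar>"
  proof (cases "length L")
    case (Suc k)
    then show ?thesis by (simp add: abs_mult mult_right_mono)
  qed simp
  moreover have "c \<ge> - \<bar>c\<bar>" "(int (length L) + 1) * \<bar>c\<bar> \<ge> \<bar>c\<bar>" "sum_list L \<le> \<bar>sum_list L\<bar>"
    by (auto simp: mult_right_mono[of 1 "int (length L) + 1" "\<bar>c\<bar>", simplified])
  ultimately have "\<bar>a\<bar> \<le> U" using up lo unfolding U_def by (simp add: abs_le_iff) linarith
  then have "\<bar>a\<bar> ^ 2 \<le> U ^ 2" by (rule power_mono) simp
  then show "a ^ 2 \<le> U ^ 2" by simp
qed

lemma spread_sq: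
  fixes x y i :: int
  assumes "\<bar>x - y\<bar> \<le> 1" "i \<noteq> x" "i \<noteq> y"
  shows "x ^ 2 + y ^ 2 < i ^ 2 + (x + y - i) ^ 2"
proof -
  have e: "i ^ 2 + (x + y - i) ^ 2 - (x ^ 2 + y ^ 2) = 2 * ((i - x) * (i - y))"
    by (simp add: power2_eq_square algebra_simps)
  have "(i - x) * (i - y) > 0"
  proof (cases "i < x")
    case True
    then have "i < y" using assms by linarith
    then show ?thesis using True mult_neg_neg[of "i - x" "i - y"] by linarith
  next
    case False
    then have "i > x" "i > y" using assms by linarith+
    then show ?thesis using mult_pos_pos[of "i - x" "i - y"] by linarith
  qed
  then show ?thesis using e by linarith
qed

definition closeM :: "int list \<Rightarrow> bool" where
  "closeM L \<longleftrightarrow> (\<exists>x y R. mset L = add_mset x (add_mset y (mset R)) \<and> \<bar>x - y\<bar> \<le> 1)"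

lemma closeM_mset: "mset L = mset L' \<Longrightarrow> closeM L = closeM L'"
  unfolding closeM_def by simp

lemma gaps:
  assumes s: "sorted_wrt (\<ge>) L" and nc: "\<not> closeM L" and j: "Suc j < length L"
  shows "L ! (Suc j) + 2 \<le> L ! j"
proof -
  define R where "R = take j L @ drop (Suc (Suc j)) L"
  have L: "L = take j L @ L ! j # L ! Suc j # drop (Suc (Suc j)) L"
    using j by (metis Cons_nth_drop_Suc Suc_lessD append_take_drop_id)
  have "mset L = add_mset (L ! j) (add_mset (L ! Suc j) (mset R))"
    unfolding R_def by (subst L) simp
  then have "\<bar>L ! j - L ! Suc j\<bar> > 1" using nc unfolding closeM_def by force
  moreover have "L ! j \<ge> L ! Suc j" using s j by (simp add: sorted_wrt_iff_nth_less)
  ultimately show ?thesis by linarith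
qed

lemma gaps2:
  assumes g: "\<And>j. Suc j < length L \<Longrightarrow> L ! (Suc j) + 2 \<le> L ! j"
  shows "i \<le> k \<Longrightarrow> k < length L \<Longrightarrow> L ! k + 2 * (int k - int i) \<le> L ! i"
proof (induction k)
  case 0
  then show ?case by simp
next
  case (Suc k)
  show ?case
  proof (cases "i = Suc k")
    case True then show ?thesis by simp
  next
    case False
    then have "i \<le> k" using Suc.prems by simp
    then have "L ! k + 2 * (int k - int i) \<le> L ! i" using Suc by simp
    moreover have "L ! (Suc k) + 2 \<le> L ! k" using g Suc.prems by simp
    ultimately show ?thesis by simp
  qed
qed

lemma vlist:
  assumes g: "\<And>j. Suc j < length L \<Longrightarrow> L ! (Suc j) + 2 \<le> L ! j"
    and lb: "\<forall>a\<in>set L. a \<ge> c + 1"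
  shows "\<exists>\<gamma>. length \<gamma> = length L \<and> sorted_wrt (\<ge>) \<gamma> \<and>
     (\<forall>j<length L. int (\<gamma> ! j) + 2 * (int (length L) - 1 - int j) + 1 + c = L ! j)"
proof -
  define N where "N = length L"
  define \<gamma> where "\<gamma> = map (\<lambda>j. nat (L ! j - 2 * (int N - 1 - int j) - 1 - c)) [0..<N]"
  have nn: "L ! j - 2 * (int N - 1 - int j) - 1 - c \<ge> 0" if "j < N" for j
  proof -
    have "L ! (N - 1) + 2 * (int (N - 1) - int j) \<le> L ! j"
      using gaps2[OF g, of j "N - 1"] that unfolding N_def by simp
    moreover have "L ! (N - 1) \<ge> c + 1" using lb that unfolding N_def by simp
    moreover have "int (N - 1) = int N - 1" using that by simp
    ultimately show ?thesis by simp
  qed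
  have "length \<gamma> = N" unfolding \<gamma>_def by simp
  moreover have "sorted_wrt (\<ge>) \<gamma>"
    unfolding sorted_wrt_iff_nth_less
  proof (intro allI impI)
    fix i j assume ij: "i < j" "j < length \<gamma>"
    then have "j < N" unfolding \<gamma>_def by simp
    then have "L ! j + 2 * (int j - int i) \<le> L ! i" using gaps2[OF g, of i j] ij unfolding N_def by simp
    then show "\<gamma> ! j \<le> \<gamma> ! i" using ij \<open>j < N\<close> unfolding \<gamma>_def by simp
  qed
  moreover have "\<forall>j<N. int (\<gamma> ! j) + 2 * (int N - 1 - int j) + 1 + c = L ! j"
    using nn unfolding \<gamma>_def by simp
  ultimately show ?thesis unfolding N_def by blast
qed

lemma in_vset:
  assumes lA: "length A = m" and lB: "length B = n"
    and sA: "sorted_wrt (\<ge>) A" and sB: "sorted_wrt (\<ge>) B"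
    and cA: "\<not> closeM A" and cB: "\<not> closeM B"
    and bA: "\<forall>a\<in>set A. a \<ge> 1 - int n" and bB: "\<forall>b\<in>set B. b \<ge> 1"
  shows "single (map Ge A @ map Gf B) \<in> Vset m n"
proof -
  obtain \<alpha> where \<alpha>: "length \<alpha> = length A" "sorted_wrt (\<ge>) \<alpha>"
     "\<forall>j<length A. int (\<alpha> ! j) + 2 * (int (length A) - 1 - int j) + 1 + (- int n) = A ! j"
    using vlist[OF gaps[OF sA cA], of "- int n"] bA by auto
  obtain \<beta> where \<beta>: "length \<beta> = length B" "sorted_wrt (\<ge>) \<beta>"
     "\<forall>j<length B. int (\<beta> ! j) + 2 * (int (length B) - 1 - int j) + 1 + 0 = B ! j"
    using vlist[OF gaps[OF sB cB], of 0] bB by auto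
  have e1: "map (\<lambda>j. Ge (int (\<alpha> ! j) + 2 * (int m - 1 - int j) + 1 - int n)) [0..<m] = map Ge A"
  proof -
    have "map Ge A = map (\<lambda>j. Ge (A ! j)) [0..<m]" using lA by (intro nth_equalityI) auto
    also have "\<dots> = map (\<lambda>j. Ge (int (\<alpha> ! j) + 2 * (int m - 1 - int j) + 1 - int n)) [0..<m]"
    proof (rule map_cong[OF refl])
      fix j assume "j \<in> set [0..<m]"
      then have "j < length A" using lA by simp
      then show "Ge (A ! j) = Ge (int (\<alpha> ! j) + 2 * (int m - 1 - int j) + 1 - int n)"
        using \<alpha>(3) lA by simp
    qed
    finally show ?thesis by simp
  qed
  have e2: "map (\<lambda>j. Gf (int (\<beta> ! j) + 2 * (int n - 1 - int j) + 1)) [0..<n] = map Gf B"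
  proof -
    have "map Gf B = map (\<lambda>j. Gf (B ! j)) [0..<n]" using lB by (intro nth_equalityI) auto
    also have "\<dots> = map (\<lambda>j. Gf (int (\<beta> ! j) + 2 * (int n - 1 - int j) + 1)) [0..<n]"
    proof (rule map_cong[OF refl])
      fix j assume "j \<in> set [0..<n]"
      then have "j < length B" using lB by simp
      then show "Gf (B ! j) = Gf (int (\<beta> ! j) + 2 * (int n - 1 - int j) + 1)"
        using \<beta>(3) lB by simp
    qed
    finally show ?thesis by simp
  qed
  have "vword m n \<alpha> \<beta> = map Ge A @ map Gf B" unfolding vword_def e1 e2 ..
  then show ?thesis unfolding Vset_def using \<alpha>(1,2) \<beta>(1,2) lA lB by force
qed

lemma bcGe: "bc (Ge i) (Ge j) = 0" and bcGf: "bc (Gf i) (Gf j) = 0"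
  by (simp_all add: bc_def)

lemma permA: "mset A = mset A' \<Longrightarrow> single (map Ge A @ map Gf B) - single (map Ge A' @ map Gf B) \<in> cspan R0gens"
  using perm_word[of Ge A A' "[]" "map Gf B", OF bcGe] by (simp only: append_Nil)

lemma permB: "mset B = mset B' \<Longrightarrow> single (map Ge A @ map Gf B) - single (map Ge A @ map Gf B') \<in> cspan R0gens"
  using perm_word[of Gf B B' "map Ge A" "[]", OF bcGf] by (simp only: append_Nil2)

lemma ss_transfer: "a - b \<in> cspan R0gens \<Longrightarrow> b \<in> cspan (Wrels \<union> V) \<Longrightarrow> a \<in> cspan (Wrels \<union> V)"
  using R0_sub cs_transfer by blast

lemma sum_decS: "S \<subseteq> {0..<length B} \<Longrightarrow> sum_list (decS S B) = sum_list B - int (card S)"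
proof -
  assume S: "S \<subseteq> {0..<length B}"
  have "sum_list (decS S B) = (\<Sum>j\<in>{0..<length B}. B ! j - (if j \<in> S then 1 else 0))"
    unfolding decS_def by (simp add: interv_sum_list_conv_sum_set_nat)
  also have "\<dots> = (\<Sum>j\<in>{0..<length B}. B ! j) - (\<Sum>j\<in>{0..<length B}. (if j \<in> S then 1 else 0))"
    by (simp add: sum_subtractf)
  also have "(\<Sum>j\<in>{0..<length B}. (if j \<in> S then 1 else 0)) = (\<Sum>j\<in>{0..<length B} \<inter> S. (1::int))"
    using sum.inter_restrict[of "{0..<length B}" "\<lambda>_. (1::int)" S] by simp
  also have "{0..<length B} \<inter> S = S" using S by blast
  also have "(\<Sum>j\<in>{0..<length B}. B ! j) = sum_list B" by (simp add: sum_list_sum_nth)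
  finally show ?thesis by simp
qed

lemma handle_bad:
  assumes IHo: "\<And>A' B'. length A' = m \<Longrightarrow> length B' = n \<Longrightarrow> nat (sum_list B') < nat (sum_list B) \<Longrightarrow> single (map Ge A' @ map Gf B') \<in> cspan (Wrels \<union> Vset m n)"
    and lA: "length A = m" and lB: "length B = n" and bad: "(\<exists>b\<in>set B. b \<le> 0) \<or> (\<exists>a\<in>set A. a \<le> - int n)"
  shows "single (map Ge A @ map Gf B) \<in> cspan (Wrels \<union> Vset m n)"
proof (cases "\<exists>b\<in>set B. b \<le> 0")
  case True
  then obtain b where b: "b \<in> set B" "b \<le> 0" by blast
  have m: "mset B = mset (remove1 b B @ [b])" using b by simp
  have "single ((map Ge A @ map Gf (remove1 b B)) @ [Gf b]) \<in> R0gens" using endv[of "Gf b" "map Ge A @ map Gf (remove1 b B)"] b by simp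
  then have "single (map Ge A @ map Gf (remove1 b B @ [b])) \<in> cspan (Wrels \<union> Vset m n)"
    using R0_sub by (auto intro: cspan.gen)
  then show ?thesis using ss_transfer[OF permB[OF m]] by blast
next
  case False
  then have b1: "\<forall>b\<in>set B. b \<ge> 1" by auto
  obtain a where a: "a \<in> set A" "a \<le> - int n" using bad False by blast
  define A1 where "A1 = remove1 a A"
  have mA: "mset A = mset (A1 @ [a])" unfolding A1_def using a by simp
  have lA1: "length A1 + 1 = m" unfolding A1_def using a lA by (simp add: length_remove1) (cases A, auto)
  define F where "F = (\<lambda>S. sm ((-1) ^ card S) (single (map Ge A1 @ Ge (a + int (card S)) # map Gf (decS S B))))"
  have Z: "(\<Sum>S\<in>Pow {0..<length B}. F S) \<in> cspan R0gens"
    unfolding F_def by (rule r3) (use a lB in simp)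
  have "(\<Sum>S\<in>Pow {0..<length B}. F S) = F {} + (\<Sum>S\<in>Pow {0..<length B} - {{}}. F S)"
    by (rule sum.remove) auto
  moreover have "F {} = single (map Ge A1 @ Ge a # map Gf B)" unfolding F_def by simp
  ultimately have w0: "single (map Ge A1 @ Ge a # map Gf B) = (\<Sum>S\<in>Pow {0..<length B}. F S) - (\<Sum>S\<in>Pow {0..<length B} - {{}}. F S)"
    by simp
  have sB: "sum_list B \<ge> int n" using sum_list_ge[OF b1] lB by simp
  have rest: "(\<Sum>S\<in>Pow {0..<length B} - {{}}. F S) \<in> cspan (Wrels \<union> Vset m n)"
  proof (rule cs_sum)
    fix S assume S: "S \<in> Pow {0..<length B} - {{}}"
    then have Ssub: "S \<subseteq> {0..<length B}" and Sne: "S \<noteq> {}" by auto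
    have fin: "finite S" using Ssub finite_subset by blast
    then have c1: "card S \<ge> 1" using Sne by (simp add: Suc_le_eq card_gt_0_iff)
    have c2: "card S \<le> n" using card_mono[OF _ Ssub] lB by simp
    have "nat (sum_list (decS S B)) < nat (sum_list B)"
      using sum_decS[OF Ssub] c1 c2 sB by simp
    then have "single (map Ge (A1 @ [a + int (card S)]) @ map Gf (decS S B)) \<in> cspan (Wrels \<union> Vset m n)"
      by (intro IHo) (use lA1 lB in simp_all)
    then show "F S \<in> cspan (Wrels \<union> Vset m n)" unfolding F_def by (intro cs_sm) simp
  qed simp
  have "single (map Ge (A1 @ [a]) @ map Gf B) \<in> cspan (Wrels \<union> Vset m n)"
    using w0 cs_diff[OF subsetD[OF R0_sub Z] rest] by simp
  then show ?thesis using ss_transfer[OF permA[OF mA]] by blast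
qed

lemma good_vset:
  assumes lA: "length A = m" and lB: "length B = n"
    and cA: "\<not> closeM A" and cB: "\<not> closeM B"
    and bA: "\<forall>a\<in>set A. a \<ge> 1 - int n" and bB: "\<forall>b\<in>set B. b \<ge> 1"
  shows "single (map Ge A @ map Gf B) \<in> cspan (Wrels \<union> Vset m n)"
proof -
  define A' where "A' = rev (sort A)"
  define B' where "B' = rev (sort B)"
  have mA: "mset A = mset A'" and mB: "mset B = mset B'" unfolding A'_def B'_def by simp_all
  have "single (map Ge A' @ map Gf B') \<in> Vset m n"
  proof (rule in_vset)
    show "length A' = m" "length B' = n" using lA lB unfolding A'_def B'_def by simp_all
    show "sorted_wrt (\<ge>) A'" "sorted_wrt (\<ge>) B'" unfolding A'_def B'_def
      by (simp_all add: sorted_wrt_rev)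
    show "\<not> closeM A'" "\<not> closeM B'" using cA cB closeM_mset[OF mA] closeM_mset[OF mB] by simp_all
    show "\<forall>a\<in>set A'. a \<ge> 1 - int n" "\<forall>b\<in>set B'. b \<ge> 1" using bA bB unfolding A'_def B'_def by simp_all
  qed
  then have "single (map Ge A' @ map Gf B') \<in> cspan (Wrels \<union> Vset m n)" by (auto intro: cspan.gen)
  then have "single (map Ge A' @ map Gf B) \<in> cspan (Wrels \<union> Vset m n)" using ss_transfer[OF permB[OF mB]] by blast
  then show ?thesis using ss_transfer[OF permA[OF mA]] by blast
qed

lemma inner:
  assumes IHo: "\<And>A' B'. length A' = m \<Longrightarrow> length B' = n \<Longrightarrow> nat (sum_list B') < nat NB \<Longrightarrow> single (map Ge A' @ map Gf B') \<in> cspan (Wrels \<union> Vset m n)"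
  shows "length A = m \<Longrightarrow> length B = n \<Longrightarrow> sum_list A = SA \<Longrightarrow> sum_list B = NB \<Longrightarrow> single (map Ge A @ map Gf B) \<in> cspan (Wrels \<union> Vset m n)"
proof -
  define Bd where "Bd = int m * (\<bar>SA\<bar> + (int m + 1) * \<bar>1 - int n\<bar>) ^ 2 + int n * (\<bar>NB\<bar> + (int n + 1) * \<bar>1\<bar>) ^ 2"
  have main: "\<forall>A B :: int list. length A = m \<longrightarrow> length B = n \<longrightarrow> sum_list A = SA \<longrightarrow> sum_list B = NB \<longrightarrow> nat (Bd - (sqs A + sqs B)) = \<mu> \<longrightarrow> single (map Ge A @ map Gf B) \<in> cspan (Wrels \<union> Vset m n)" for \<mu>
  proof (induction \<mu> rule: less_induct)
    case (less \<mu>)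
    show ?case
    proof (intro allI impI)
      fix A B :: "int list" assume lA: "length A = m" and lB: "length B = n" and sA: "sum_list A = SA" and sB: "sum_list B = NB"
        and mu: "nat (Bd - (sqs A + sqs B)) = \<mu>"
      have IHo': "\<And>A' B'. length A' = m \<Longrightarrow> length B' = n \<Longrightarrow> nat (sum_list B') < nat (sum_list B) \<Longrightarrow> single (map Ge A' @ map Gf B') \<in> cspan (Wrels \<union> Vset m n)"
        using IHo sB by blast
      show "single (map Ge A @ map Gf B) \<in> cspan (Wrels \<union> Vset m n)"
      proof (cases "(\<exists>b\<in>set B. b \<le> 0) \<or> (\<exists>a\<in>set A. a \<le> - int n)")
        case True
        then show ?thesis using handle_bad[OF IHo' lA lB] by blast
      next
        case False
        then have bA: "\<forall>a\<in>set A. a \<ge> 1 - int n" and bB: "\<forall>b\<in>set B. b \<ge> 1" by auto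
        have nxt: "single (map Ge A' @ map Gf B') \<in> cspan (Wrels \<union> Vset m n)"
          if l': "length A' = m" "length B' = n" "sum_list A' = SA" "sum_list B' = NB" and gt: "sqs A' + sqs B' > sqs A + sqs B" for A' B'
        proof (cases "(\<exists>b\<in>set B'. b \<le> 0) \<or> (\<exists>a\<in>set A'. a \<le> - int n)")
          case True
          have "\<And>A'' B''. length A'' = m \<Longrightarrow> length B'' = n \<Longrightarrow> nat (sum_list B'') < nat (sum_list B') \<Longrightarrow> single (map Ge A'' @ map Gf B'') \<in> cspan (Wrels \<union> Vset m n)"
            using IHo l'(4) by blast
          then show ?thesis using handle_bad l'(1,2) True by blast
        next
          case False
          then have bA': "\<forall>a\<in>set A'. a \<ge> 1 - int n" and bB': "\<forall>b\<in>set B'. b \<ge> 1" by auto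
          have "sqs A' \<le> int m * (\<bar>SA\<bar> + (int m + 1) * \<bar>1 - int n\<bar>) ^ 2"
            using sqb[OF bA'] l' by simp
          moreover have "sqs B' \<le> int n * (\<bar>NB\<bar> + (int n + 1) * \<bar>1\<bar>) ^ 2"
            using sqb[OF bB'] l' by simp
          ultimately have "sqs A' + sqs B' \<le> Bd" unfolding Bd_def by simp
          then have "nat (Bd - (sqs A' + sqs B')) < \<mu>" using gt mu by simp
          then show ?thesis using less.IH l' by blast
        qed
        show ?thesis
        proof (cases "closeM A")
          case True
          then obtain x y R where m: "mset A = add_mset x (add_mset y (mset R))" and xy: "\<bar>x - y\<bar> \<le> 1"
            unfolding closeM_def by blast
          have m': "mset A = mset (x # y # R)" using m by simp
          have lR: "length R + 2 = m" using lA arg_cong[OF m, of size] by simp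
          have sR: "x + y + sum_list R = SA" using sA sum_list_mset[OF m'] by simp
          have qR: "sqs A = x ^ 2 + y ^ 2 + sqs R" using sqs_mset[OF m'] by (simp add: sqs_def)
          have "single ([] @ [Ge x, Ge y] @ (map Ge R @ map Gf B)) \<in> cspan (Wrels \<union> Vset m n)"
          proof (rule spread)
            show "allowed Ge Ge" by (simp add: allowed_def)
            show "\<bar>x - y\<bar> \<le> 1" by (rule xy)
            fix i assume i: "i \<noteq> x" "i \<noteq> y"
            have "single (map Ge (i # (x + y - i) # R) @ map Gf B) \<in> cspan (Wrels \<union> Vset m n)"
            proof (rule nxt)
              show "length (i # (x + y - i) # R) = m" using lR by simp
              show "sum_list (i # (x + y - i) # R) = SA" using sR by simp
              show "sqs (i # (x + y - i) # R) + sqs B > sqs A + sqs B"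
                using spread_sq[OF xy i] qR by (simp add: sqs_def)
            qed (use lB sB in auto)
            then show "single ([] @ [Ge i, Ge (x + y - i)] @ (map Ge R @ map Gf B)) \<in> cspan (Wrels \<union> Vset m n)"
              by simp
          qed
          then have "single (map Ge (x # y # R) @ map Gf B) \<in> cspan (Wrels \<union> Vset m n)" by simp
          then show ?thesis using ss_transfer[OF permA[OF m']] by blast
        next
          case nA: False
          show ?thesis
          proof (cases "closeM B")
            case True
            then obtain x y R where m: "mset B = add_mset x (add_mset y (mset R))" and xy: "\<bar>x - y\<bar> \<le> 1"
              unfolding closeM_def by blast
            have m': "mset B = mset (x # y # R)" using m by simp
            have lR: "length R + 2 = n" using lB arg_cong[OF m, of size] by simp
            have sR: "x + y + sum_list R = NB" using sB sum_list_mset[OF m'] by simp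
            have qR: "sqs B = x ^ 2 + y ^ 2 + sqs R" using sqs_mset[OF m'] by (simp add: sqs_def)
            have "single (map Ge A @ [Gf x, Gf y] @ map Gf R) \<in> cspan (Wrels \<union> Vset m n)"
            proof (rule spread)
              show "allowed Gf Gf" by (simp add: allowed_def)
              show "\<bar>x - y\<bar> \<le> 1" by (rule xy)
              fix i assume i: "i \<noteq> x" "i \<noteq> y"
              have "single (map Ge A @ map Gf (i # (x + y - i) # R)) \<in> cspan (Wrels \<union> Vset m n)"
              proof (rule nxt)
                show "length (i # (x + y - i) # R) = n" using lR by simp
                show "sum_list (i # (x + y - i) # R) = NB" using sR by simp
                show "sqs A + sqs (i # (x + y - i) # R) > sqs A + sqs B"
                  using spread_sq[OF xy i] qR by (simp add: sqs_def)
              qed (use lA sA in auto)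
              then show "single (map Ge A @ [Gf i, Gf (x + y - i)] @ map Gf R) \<in> cspan (Wrels \<union> Vset m n)"
                by simp
            qed
            then have "single (map Ge A @ map Gf (x # y # R)) \<in> cspan (Wrels \<union> Vset m n)" by simp
            then show ?thesis using ss_transfer[OF permB[OF m']] by blast
          next
            case False
            then show ?thesis using good_vset[OF lA lB nA False bA bB] by blast
          qed
        qed
      qed
    qed
  qed
  show "length A = m \<Longrightarrow> length B = n \<Longrightarrow> sum_list A = SA \<Longrightarrow> sum_list B = NB \<Longrightarrow> single (map Ge A @ map Gf B) \<in> cspan (Wrels \<union> Vset m n)"
    using main by blast
qed

lemma mainEF: "length A = m \<Longrightarrow> length B = n \<Longrightarrow> single (map Ge A @ map Gf B) \<in> cspan (Wrels \<union> Vset m n)"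
proof -
  have "\<forall>A B :: int list. length A = m \<longrightarrow> length B = n \<longrightarrow> nat (sum_list B) = N \<longrightarrow> single (map Ge A @ map Gf B) \<in> cspan (Wrels \<union> Vset m n)" for N
  proof (induction N rule: less_induct)
    case (less N)
    show ?case
    proof (intro allI impI)
      fix A B :: "int list" assume lA: "length A = m" and lB: "length B = n" and sB: "nat (sum_list B) = N"
      show "single (map Ge A @ map Gf B) \<in> cspan (Wrels \<union> Vset m n)"
      proof (rule inner[OF _ lA lB refl refl])
        fix A' B' :: "int list" assume "length A' = m" "length B' = n" "nat (sum_list B') < nat (sum_list B)"
        then show "single (map Ge A' @ map Gf B') \<in> cspan (Wrels \<union> Vset m n)"
          using less.IH sB by blast
      qed
    qed
  qed
  then show "length A = m \<Longrightarrow> length B = n \<Longrightarrow> single (map Ge A @ map Gf B) \<in> cspan (Wrels \<union> Vset m n)"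
    by blast
qed

definition ise :: "gen \<Rightarrow> bool" where "ise g = (case g of Ge _ \<Rightarrow> True | _ \<Rightarrow> False)"
definition isf :: "gen \<Rightarrow> bool" where "isf g = (case g of Gf _ \<Rightarrow> True | _ \<Rightarrow> False)"
definition ish :: "gen \<Rightarrow> bool" where "ish g = (case g of Gh _ \<Rightarrow> True | _ \<Rightarrow> False)"

lemma is_simps[simp]: "ise (Ge i)" "\<not> ise (Gf i)" "\<not> ise (Gh i)" "isf (Gf i)" "\<not> isf (Ge i)" "\<not> isf (Gh i)"
  "ish (Gh i)" "\<not> ish (Ge i)" "\<not> ish (Gf i)"
  by (simp_all add: ise_def isf_def ish_def)

fun invc :: "gen list \<Rightarrow> nat" where
  "invc [] = 0"
| "invc (g # r) = (if isf g then length (filter ise r) else 0) + invc r"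

lemma inv_append: "invc (u @ v) = invc u + length (filter isf u) * length (filter ise v) + invc v"
  by (induction u) (auto simp: algebra_simps)

lemma filter_map_Ge: "filter ise (map Ge A) = map Ge A" "filter isf (map Ge A) = []" "filter ish (map Ge A) = []"
  by (induction A) auto

lemma filter_map_Gf: "filter ise (map Gf A) = []" "filter isf (map Gf A) = map Gf A" "filter ish (map Gf A) = []"
  by (induction A) auto

lemma gen_cases3: "(\<And>i. g = Ge i \<Longrightarrow> P) \<Longrightarrow> (\<And>i. g = Gf i \<Longrightarrow> P) \<Longrightarrow> (\<And>i. g = Gh i \<Longrightarrow> P) \<Longrightarrow> P"
  by (cases g) auto

lemma form0: "(\<forall>g\<in>set w. \<not> ish g) \<Longrightarrow> invc w = 0 \<Longrightarrow> \<exists>A B. w = map Ge A @ map Gf B"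
proof (induction w)
  case Nil
  then show ?case by (intro exI[of _ "[]"]) simp
next
  case (Cons g r)
  then obtain A B where r: "r = map Ge A @ map Gf B" by auto
  show ?case
  proof (rule gen_cases3[of g])
    fix i assume "g = Ge i"
    then show ?thesis using r by (intro exI[of _ "i # A"] exI[of _ B]) simp
  next
    fix j assume g: "g = Gf j"
    then have "length (filter ise r) = 0" using Cons.prems by simp
    then have "A = []" using r by (simp add: filter_map_Ge filter_map_Gf)
    then show ?thesis using r g by (intro exI[of _ "[]"] exI[of _ "j # B"]) simp
  next
    fix i assume "g = Gh i"
    then show ?thesis using Cons.prems by simp
  qed
qed

lemma split_inv: "(\<forall>g\<in>set w. \<not> ish g) \<Longrightarrow> invc w > 0 \<Longrightarrow> \<exists>P j i r. w = P @ [Gf j, Ge i] @ r"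
proof (induction w)
  case Nil
  then show ?case by simp
next
  case (Cons g r)
  show ?case
  proof (cases "invc r > 0")
    case True
    then obtain P j i r' where "r = P @ [Gf j, Ge i] @ r'" using Cons by auto
    then show ?thesis by (intro exI[of _ "g # P"]) auto
  next
    case False
    then obtain A B where r: "r = map Ge A @ map Gf B" using form0[of r] Cons.prems by auto
    have pos: "isf g \<and> length (filter ise r) > 0" using Cons.prems False by (auto split: if_splits)
    then obtain j where g: "g = Gf j" by (cases g) auto
    from pos r have "A \<noteq> []" by (auto simp: filter_map_Ge filter_map_Gf)
    then obtain i A' where "A = i # A'" by (cases A) auto
    then show ?thesis using r g by (intro exI[of _ "[]"] exI[of _ j] exI[of _ i] exI[of _ "map Ge A' @ map Gf B"]) auto
  qed
qed

lemma deg2_app: "deg2 (u @ v) = (fst (deg2 u) + fst (deg2 v), snd (deg2 u) + snd (deg2 v))"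
  by (simp add: deg2_def)

lemma deg2_EF: "deg2 (map Ge A @ map Gf B) = (length A, length B)"
  by (simp add: deg2_def filter_map o_def)

lemma hl: "a \<le> - bnd r \<Longrightarrow> single (P @ [Gh c] @ r) - single (P @ [Ge a, Gf (c - a)] @ r) \<in> cspan R0gens"
proof -
  assume a: "a \<le> - bnd r"
  have e: "single (P @ [Ge a, Gf (c - a)] @ r) = single (P @ [Gf (c - a), Ge a] @ r) + single (P @ [Gh c] @ r)
     + (single (P @ [Ge a, Gf (c - a)] @ r) - single (P @ [Gf (c - a), Ge a] @ r) - brk (Ge a) (Gf (c - a)) P r)"
    using comm'[of P "Ge a" "Gf (c - a)" r] by (simp add: bc_def)
  have v: "single ((P @ [Gf (c - a)]) @ [Ge a] @ r) \<in> cspan R0gens" using van[of "Ge a" r "P @ [Gf (c - a)]"] a by simp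
  have "single (P @ [Gh c] @ r) - single (P @ [Ge a, Gf (c - a)] @ r) =
     - (single ((P @ [Gf (c - a)]) @ [Ge a] @ r) + (single (P @ [Ge a, Gf (c - a)] @ r) - single (P @ [Gf (c - a), Ge a] @ r) - brk (Ge a) (Gf (c - a)) P r))"
    by (subst e) (simp add: algebra_simps)
  also have "\<dots> \<in> cspan R0gens"
    by (intro cs_neg cs_add v cspan.gen comm)
  finally show ?thesis .
qed

lemma stepA1: "(\<forall>g\<in>set w. \<not> ish g) \<Longrightarrow> deg2 w = (m, n) \<Longrightarrow> single w \<in> cspan (Wrels \<union> Vset m n)"
proof (induction "invc w" arbitrary: w rule: less_induct)
  case less
  show ?case
  proof (cases "invc w = 0")
    case True
    then obtain A B where w: "w = map Ge A @ map Gf B" using form0 less.prems by blast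
    then have "length A = m" "length B = n" using less.prems deg2_EF by auto
    then show ?thesis using mainEF w by blast
  next
    case False
    then obtain P j i r where w: "w = P @ [Gf j, Ge i] @ r" using split_inv less.prems by blast
    define a where "a = - bnd r"
    define w1 where "w1 = P @ [Ge i, Gf j] @ r"
    define w2 where "w2 = P @ [Ge a, Gf (j + i - a)] @ r"
    have i1: "invc w1 < invc w" and i2: "invc w2 < invc w"
      unfolding w w1_def w2_def by (simp_all add: inv_append)
    have h1: "\<forall>g\<in>set w1. \<not> ish g" "\<forall>g\<in>set w2. \<not> ish g" using less.prems unfolding w w1_def w2_def by auto
    have d1: "deg2 w1 = (m, n)" "deg2 w2 = (m, n)" using less.prems(2) unfolding w w1_def w2_def
      by (simp_all add: deg2_app) (simp_all add: deg2_def)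
    have s1: "single w1 \<in> cspan (Wrels \<union> Vset m n)" using less.hyps[OF i1 h1(1) d1(1)] .
    have s2: "single w2 \<in> cspan (Wrels \<union> Vset m n)" using less.hyps[OF i2 h1(2) d1(2)] .
    have c: "single w = single w1 + sm (-1) (single (P @ [Gh (j + i)] @ r))
        + (single w - single w1 - brk (Gf j) (Ge i) P r)"
      unfolding w w1_def by (simp add: brk_bc bc_def)
    have cR: "single w - single w1 - brk (Gf j) (Ge i) P r \<in> cspan (Wrels \<union> Vset m n)"
      unfolding w w1_def using comm R0_sub by (blast intro: cspan.gen)
    have hR: "single (P @ [Gh (j + i)] @ r) \<in> cspan (Wrels \<union> Vset m n)"
      using ss_transfer[OF hl[of a r P "j + i"] s2[unfolded w2_def]] unfolding a_def by simp
    show ?thesis by (subst c) (intro cs_add s1 cs_sm hR cR)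
  qed
qed

lemma stepA2: "deg2 w = (m, n) \<Longrightarrow> single w \<in> cspan (Wrels \<union> Vset m n)"
proof (induction "length (filter ish w)" arbitrary: w rule: less_induct)
  case less
  show ?case
  proof (cases "\<exists>g\<in>set w. ish g")
    case False
    then show ?thesis using stepA1 less.prems by blast
  next
    case True
    then obtain g where g: "g \<in> set w" "ish g" by blast
    obtain c where gc: "g = Gh c" using g(2) by (cases g) auto
    obtain P r where w: "w = P @ g # r" using split_list[OF g(1)] by blast
    define a where "a = - bnd r"
    define w2 where "w2 = P @ [Ge a, Gf (c - a)] @ r"
    have l: "length (filter ish w2) < length (filter ish w)" unfolding w w2_def gc by simp
    have d: "deg2 w2 = (m, n)" using less.prems unfolding w w2_def gc
      by (simp add: deg2_app) (simp add: deg2_def)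
    have "single w2 \<in> cspan (Wrels \<union> Vset m n)" by (rule less.hyps[OF l d])
    then show ?thesis using ss_transfer[OF hl[of a r P c]] unfolding a_def w2_def w gc by simp
  qed
qed

theorem theorem4p1p1:
  fixes m n :: nat and x :: "gen list \<Rightarrow> complex"
  assumes "finite {w. x w \<noteq> 0}"
    and "\<forall>w. x w \<noteq> 0 \<longrightarrow> deg2 w = (m, n)"
  shows "x \<in> cspan (Wrels \<union> Vset m n)"
proof -
  define S0 where "S0 = {w. x w \<noteq> 0}"
  have "x = (\<Sum>w\<in>S0. sm (x w) (single w))"
  proof (rule ext)
    fix u
    have "(\<Sum>w\<in>S0. sm (x w) (single w)) u = (\<Sum>w\<in>S0. if u = w then x w else 0)"
      by (auto simp: sum_apply sm_def single_def intro!: sum.cong)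
    also have "\<dots> = (if u \<in> S0 then x u else 0)" using assms(1) unfolding S0_def by (simp add: sum.delta)
    also have "\<dots> = x u" unfolding S0_def by simp
    finally show "x u = (\<Sum>w\<in>S0. sm (x w) (single w)) u" by simp
  qed
  also have "\<dots> \<in> cspan (Wrels \<union> Vset m n)"
    using assms unfolding S0_def by (intro cs_sum cs_sm stepA2) auto
  finally show ?thesis .
qed

end
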